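(* Let $X$ take values in $\{1,\dots,K\}$ with $p_x=P(X=x)>0$ for each $x$. Assume consistency $Y=Y_X$, conditional ignorability $(Y_1,\dots,Y_K)\perp X\mid \boldsymbol Z$, and positivity $0<P(X=x\mid \boldsymbol Z=\boldsymbol z)<1$ for all $x$ and all $\boldsymbol z$. Then $$\mathcal{MI}_X=\sum_{x=1}^{K}\sum_{x^*\neq x}p_x\,p_{x^*}\;\mathbb E_{\boldsymbol Z\mid X=x}\Big(\big[\mathbb E(Y_x\mid \boldsymbol Z)-\mathbb E(Y_{x^*}\mid \boldsymbol Z)\big]^2\Big),$$ where $\mathbb E_{\boldsymbol Z\mid X=x}$ denotes expectation over $\boldsymbol Z$ drawn from its conditional distribution given $X=x$.
   Context: Let $O=(Y,X,\boldsymbol Z)$ be a random vector with real outcome $Y$, $\mathbb E[Y^2]<\infty$, predictor/treatment $X$ and covariate vector $\boldsymbol Z$. Let $f_0(x,\boldsymbol z)=\mathbb E(Y\mid X=x,\boldsymbol Z=\boldsymbol z)$ be the true conditional expectation function. Let $O^{(a)}=(Y^{(a)},X^{(a)},\boldsymbol Z^{(a)})$ and $O^{(b)}=(Y^{(b)},X^{(b)},\boldsymbol Z^{(b)})$ be independent copies of $O$. Define $e_{\mathrm{orig}}=\mathbb E\big[(Y^{(a)}-f_0(X^{(a)},\boldsymbol Z^{(a)}))^2\big]$ and $e_{\mathrm{switch}}=\mathbb E\big[(Y^{(a)}-f_0(X^{(b)},\boldsymbol Z^{(a)}))^2\big]$ (all expectations assumed finite), and the Marginal Variable Importance Metric (MVIM)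 $\mathcal{MI}_X=e_{\mathrm{switch}}-e_{\mathrm{orig}}$. For each treatment level $x$, $Y_x$ denotes the potential outcome under $X=x$. *)

theory Defs
  imports "HOL-Probability.Probability"
begin

definition gen_alg :: "'a measure \<Rightarrow> ('a \<Rightarrow> 'd) \<Rightarrow> 'd measure \<Rightarrow> 'a measure" where
  "gen_alg M W MW = vimage_algebra (space M) W MW"

definition cond_indep ::
  "'a measure \<Rightarrow> ('a \<Rightarrow> 'b) \<Rightarrow> 'b measure \<Rightarrow> ('a \<Rightarrow> 'c) \<Rightarrow> 'c measure
     \<Rightarrow> ('a \<Rightarrow> 'd) \<Rightarrow> 'd measure \<Rightarrow> bool" where
  "cond_indep M U MU V MV W MW \<longleftrightarrow>
     (\<forall>A\<in>sets MU. \<forall>B\<in>sets MV. AE \<omega> in M.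
        real_cond_exp M (gen_alg M W MW)
          (indicator ({\<omega>\<in>space M. U \<omega> \<in> A} \<inter> {\<omega>\<in>space M. V \<omega> \<in> B})) \<omega>
        = real_cond_exp M (gen_alg M W MW) (indicator {\<omega>\<in>space M. U \<omega> \<in> A}) \<omega>
          * real_cond_exp M (gen_alg M W MW) (indicator {\<omega>\<in>space M. V \<omega> \<in> B}) \<omega>)"

end

theory Submission
  imports Defs
begin


lemma gen_alg_subalg:
  assumes "W \<in> measurable M MW" shows "subalgebra M (gen_alg M W MW)"
  using assms unfolding subalgebra_def gen_alg_def measurable_iff_sets by simp

lemma gen_alg_sfs:
  assumes "prob_space M" "W \<in> measurable M MW"
  shows "sigma_finite_subalgebra M (gen_alg M W MW)"
proof -
  interpret prob_space M by fact
  show ?thesis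
    by (rule finite_measure_subalgebra_is_sigma_finite)
       (simp add: finite_measure_subalgebra_def finite_measure_subalgebra_axioms_def
           gen_alg_subalg[OF assms(2)] finite_measure_axioms)
qed

lemma gen_alg_meas:
  assumes "W \<in> measurable M MW" "h \<in> borel_measurable MW"
  shows "(\<lambda>\<omega>. h (W \<omega>)) \<in> borel_measurable (gen_alg M W MW)"
  unfolding gen_alg_def
  by (rule measurable_compose[OF measurable_vimage_algebra1 assms(2)])
     (use assms(1) in \<open>auto simp: measurable_def\<close>)

lemma gen_alg_nested:
  assumes W: "W \<in> measurable M MW" and phi: "\<phi> \<in> measurable MW MV"
    and V: "\<And>\<omega>. \<omega> \<in> space M \<Longrightarrow> V \<omega> = \<phi> (W \<omega>)"
  shows "subalgebra (gen_alg M W MW) (gen_alg M V MV)"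
proof -
  have Wv: "W \<in> measurable (gen_alg M W MW) MW"
    unfolding gen_alg_def by (rule measurable_vimage_algebra1) (use W in \<open>auto simp: measurable_def\<close>)
  have "(\<lambda>\<omega>. \<phi> (W \<omega>)) \<in> measurable (gen_alg M W MW) MV"
    by (rule measurable_compose[OF Wv phi])
  then have "V \<in> measurable (gen_alg M W MW) MV"
    by (rule measurable_cong[THEN iffD1, rotated]) (simp add: V gen_alg_def)
  then show ?thesis
    unfolding subalgebra_def measurable_iff_sets by (simp add: gen_alg_def)
qed

lemma L2_mult_integrable:
  fixes f g :: "'a \<Rightarrow> real"
  assumes "f \<in> borel_measurable M" "g \<in> borel_measurable M"
    "integrable M (\<lambda>x. (f x)^2)" "integrable M (\<lambda>x. (g x)^2)"
  shows "integrable M (\<lambda>x. f x * g x)"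
proof (rule Bochner_Integration.integrable_bound[of _ "\<lambda>x. (f x)^2 + (g x)^2"])
  show "integrable M (\<lambda>x. (f x)^2 + (g x)^2)" using assms by auto
  show "(\<lambda>x. f x * g x) \<in> borel_measurable M" using assms by auto
  show "AE x in M. norm (f x * g x) \<le> norm ((f x)^2 + (g x)^2)"
  proof (rule AE_I2)
    fix x
    have "2 * \<bar>f x\<bar> * \<bar>g x\<bar> \<le> (f x)^2 + (g x)^2"
      using sum_squares_bound[of "\<bar>f x\<bar>" "\<bar>g x\<bar>"] by simp
    moreover have "0 \<le> \<bar>f x\<bar> * \<bar>g x\<bar>" by simp
    moreover have "0 \<le> (f x)^2 + (g x)^2" by simp
    ultimately have "\<bar>f x\<bar> * \<bar>g x\<bar> \<le> (f x)^2 + (g x)^2" by linarith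
    then have "\<bar>f x * g x\<bar> \<le> (f x)^2 + (g x)^2" by (simp add: abs_mult)
    then show "norm (f x * g x) \<le> norm ((f x)^2 + (g x)^2)" by simp
  qed
qed


lemma pushforward_zero:
  fixes w V :: "'a \<Rightarrow> real"
  assumes w[measurable]: "w \<in> borel_measurable M" and V[measurable]: "V \<in> borel_measurable M"
    and wi: "integrable M w" and wV: "integrable M (\<lambda>x. w x * V x)"
    and zero: "\<And>B. B \<in> sets borel \<Longrightarrow> (\<integral>x. w x * indicator B (V x) \<partial>M) = 0"
  shows "(\<integral>x. w x * V x \<partial>M) = 0"
proof -
  define wp where "wp = (\<lambda>x. max (w x) 0)"
  define wm where "wm = (\<lambda>x. max (- w x) 0)"
  have [measurable]: "wp \<in> borel_measurable M" "wm \<in> borel_measurable M"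
    unfolding wp_def wm_def by measurable
  have wpm: "\<And>x. w x = wp x - wm x" "\<And>x. wp x \<ge> 0" "\<And>x. wm x \<ge> 0"
    unfolding wp_def wm_def by auto
  have wpb: "\<And>x. \<bar>wp x\<bar> \<le> \<bar>w x\<bar>" "\<And>x. \<bar>wm x\<bar> \<le> \<bar>w x\<bar>"
    unfolding wp_def wm_def by auto
  have intI: "integrable M (\<lambda>x. wp x * indicator B (V x))" "integrable M (\<lambda>x. wm x * indicator B (V x))"
    if "B \<in> sets borel" for B
    using that by (auto intro!: Bochner_Integration.integrable_bound[OF wi] AE_I2
        simp: abs_mult indicator_def wp_def wm_def)
  have intV: "integrable M (\<lambda>x. wp x * V x)" "integrable M (\<lambda>x. wm x * V x)"
    by (auto intro!: Bochner_Integration.integrable_bound[OF wV] AE_I2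
        simp: abs_mult wp_def wm_def mult_right_mono)
  have ind: "(\<integral>x. wp x * indicator B (V x) \<partial>M) = (\<integral>x. wm x * indicator B (V x) \<partial>M)"
    if B: "B \<in> sets borel" for B
  proof -
    have "(\<integral>x. wp x * indicator B (V x) \<partial>M) - (\<integral>x. wm x * indicator B (V x) \<partial>M)
        = (\<integral>x. wp x * indicator B (V x) - wm x * indicator B (V x) \<partial>M)"
      using intI[OF B] by simp
    also have "\<dots> = (\<integral>x. w x * indicator B (V x) \<partial>M)"
      by (simp add: wpm(1) left_diff_distrib)
    also have "\<dots> = 0" using zero[OF B] .
    finally show ?thesis by simp
  qed
  have emd: "emeasure (distr (density M (\<lambda>x. ennreal (u x))) borel V) B
        = ennreal (\<integral>x. u x * indicator B (V x) \<partial>M)"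
    if u[measurable]: "u \<in> borel_measurable M" and u0: "\<And>x. u x \<ge> 0"
      and ui: "integrable M (\<lambda>x. u x * indicator B (V x))" and B[measurable]: "B \<in> sets borel" for u B
  proof -
    have "emeasure (distr (density M (\<lambda>x. ennreal (u x))) borel V) B
        = emeasure (density M (\<lambda>x. ennreal (u x))) (V -` B \<inter> space M)"
      by (subst emeasure_distr) auto
    also have "\<dots> = (\<integral>\<^sup>+x. ennreal (u x) * indicator (V -` B \<inter> space M) x \<partial>M)"
      by (subst emeasure_density) auto
    also have "\<dots> = (\<integral>\<^sup>+x. ennreal (u x * indicator B (V x)) \<partial>M)"
      by (intro nn_integral_cong) (auto simp: indicator_def)
    also have "\<dots> = ennreal (\<integral>x. u x * indicator B (V x) \<partial>M)"
      by (rule nn_integral_eq_integral[OF ui]) (auto simp: u0)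
    finally show ?thesis .
  qed
  have eq: "distr (density M (\<lambda>x. ennreal (wp x))) borel V = distr (density M (\<lambda>x. ennreal (wm x))) borel V"
  proof (rule measure_eqI)
    show "sets (distr (density M (\<lambda>x. ennreal (wp x))) borel V) = sets (distr (density M (\<lambda>x. ennreal (wm x))) borel V)"
      by simp
    fix B assume "B \<in> sets (distr (density M (\<lambda>x. ennreal (wp x))) borel V)"
    then have B: "B \<in> sets borel" by simp
    show "emeasure (distr (density M (\<lambda>x. ennreal (wp x))) borel V) B = emeasure (distr (density M (\<lambda>x. ennreal (wm x))) borel V) B"
      using emd[of wp B] emd[of wm B] intI[OF B] ind[OF B] wpm B by simp
  qed
  have intd: "(\<integral>y. y \<partial>(distr (density M (\<lambda>x. ennreal (u x))) borel V)) = (\<integral>x. u x * V x \<partial>M)"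
    if u[measurable]: "u \<in> borel_measurable M" and u0: "\<And>x. u x \<ge> 0" for u
  proof -
    have "(\<integral>y. y \<partial>(distr (density M (\<lambda>x. ennreal (u x))) borel V)) = (\<integral>x. V x \<partial>density M (\<lambda>x. ennreal (u x)))"
      by (subst integral_distr) auto
    also have "\<dots> = (\<integral>x. u x *\<^sub>R V x \<partial>M)"
      by (rule integral_density) (auto simp: u0)
    finally show ?thesis by simp
  qed
  have "(\<integral>x. wp x * V x \<partial>M) = (\<integral>x. wm x * V x \<partial>M)"
    using intd[of wp] intd[of wm] eq wpm by simp
  moreover have "(\<integral>x. w x * V x \<partial>M) = (\<integral>x. wp x * V x \<partial>M) - (\<integral>x. wm x * V x \<partial>M)"
  proof -
    have "(\<integral>x. w x * V x \<partial>M) = (\<integral>x. wp x * V x - wm x * V x \<partial>M)"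
      by (simp add: wpm(1) left_diff_distrib)
    also have "\<dots> = (\<integral>x. wp x * V x \<partial>M) - (\<integral>x. wm x * V x \<partial>M)"
      using intV by simp
    finally show ?thesis .
  qed
  ultimately show ?thesis by simp
qed


lemma ci_extend:
  fixes V :: "'a \<Rightarrow> real"
  assumes sf: "sigma_finite_subalgebra M F" and ps: "prob_space M"
    and V[measurable]: "V \<in> borel_measurable M" and Vi: "integrable M V"
    and A[measurable]: "A \<in> sets M"
    and ci: "\<And>B. B \<in> sets borel \<Longrightarrow> AE \<omega> in M.
       real_cond_exp M F (indicator ({\<omega>\<in>space M. V \<omega> \<in> B} \<inter> A)) \<omega>
       = real_cond_exp M F (indicator {\<omega>\<in>space M. V \<omega> \<in> B}) \<omega> * real_cond_exp M F (indicator A) \<omega>"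
  shows "AE \<omega> in M. real_cond_exp M F (\<lambda>\<omega>. indicator A \<omega> * V \<omega>) \<omega>
            = real_cond_exp M F (indicator A) \<omega> * real_cond_exp M F V \<omega>"
proof -
  interpret sigma_finite_subalgebra M F by fact
  interpret P: prob_space M by fact
  have subF: "\<And>S. S \<in> sets F \<Longrightarrow> S \<in> sets M"
    using subalg unfolding subalgebra_def by auto
  define \<pi> where "\<pi> = real_cond_exp M F (indicator A)"
  define \<mu> where "\<mu> = real_cond_exp M F V"
  have [measurable]: "\<pi> \<in> borel_measurable F" "\<pi> \<in> borel_measurable M"
    "\<mu> \<in> borel_measurable F" "\<mu> \<in> borel_measurable M"
    unfolding \<pi>_def \<mu>_def by auto
  have intI: "\<And>E. E \<in> sets M \<Longrightarrow> integrable M (indicator E :: 'a \<Rightarrow> real)"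
    by (rule integrable_real_indicator) (auto simp: P.emeasure_finite less_top[symmetric])
  have intA: "integrable M (indicator A :: 'a \<Rightarrow> real)" using A by (rule intI)
  have "AE \<omega> in M. 0 \<le> \<pi> \<omega>"
    unfolding \<pi>_def by (rule real_cond_exp_pos) auto
  moreover have "AE \<omega> in M. \<pi> \<omega> \<le> real_cond_exp M F (\<lambda>_. 1) \<omega>"
    unfolding \<pi>_def by (rule real_cond_exp_mono) (auto simp: intA indicator_def)
  moreover have "AE \<omega> in M. real_cond_exp M F (\<lambda>_. 1::real) \<omega> = 1"
    by (rule real_cond_exp_F_meas) auto
  ultimately have pib: "AE \<omega> in M. 0 \<le> \<pi> \<omega> \<and> \<pi> \<omega> \<le> 1" by eventually_elim auto
  have pia: "AE \<omega> in M. \<bar>\<pi> \<omega>\<bar> \<le> 1" using pib by eventually_elim auto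
  have intmu: "integrable M \<mu>" unfolding \<mu>_def using Vi by (rule real_cond_exp_int)
  have intpi: "integrable M \<pi>" unfolding \<pi>_def using intA by (rule real_cond_exp_int)
  have bnd: "integrable M (\<lambda>\<omega>. c \<omega> * f \<omega>)"
    if "integrable M f" "c \<in> borel_measurable M" "f \<in> borel_measurable M"
       "AE \<omega> in M. \<bar>c \<omega>\<bar> \<le> 1" for c f :: "'a \<Rightarrow> real"
    using that by (intro Bochner_Integration.integrable_bound[OF that(1)])
      (auto elim!: eventually_mono simp: abs_mult intro: mult_left_le_one_le)
  have bnd': "integrable M (\<lambda>\<omega>. f \<omega> * c \<omega>)"
    if "integrable M f" "c \<in> borel_measurable M" "f \<in> borel_measurable M"
       "AE \<omega> in M. \<bar>c \<omega>\<bar> \<le> 1" for c f :: "'a \<Rightarrow> real"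
    using bnd[OF that] by (simp add: mult.commute)
  have piS: "AE \<omega> in M. \<bar>indicator S \<omega> * \<pi> \<omega>\<bar> \<le> 1" for S :: "'a set"
    using pib by eventually_elim (auto simp: indicator_def)
  show ?thesis
    unfolding \<pi>_def[symmetric] \<mu>_def[symmetric]
  proof (rule real_cond_exp_charact)
    show "integrable M (\<lambda>\<omega>. indicator A \<omega> * V \<omega>)"
      using integrable_mult_indicator[OF A Vi] by simp
    show "integrable M (\<lambda>\<omega>. \<pi> \<omega> * \<mu> \<omega>)"
      by (rule bnd[OF intmu _ _ pia]) auto
    show "(\<lambda>\<omega>. \<pi> \<omega> * \<mu> \<omega>) \<in> borel_measurable F" by measurable
    fix S assume S: "S \<in> sets F"
    have SM[measurable]: "S \<in> sets M" using subF[OF S] .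
    have [measurable]: "indicator S \<in> borel_measurable F" using S by simp
    have "(\<integral>\<omega>\<in>S. \<pi> \<omega> * \<mu> \<omega> \<partial>M) = (\<integral>\<omega>. (indicator S \<omega> * \<pi> \<omega>) * \<mu> \<omega> \<partial>M)"
      unfolding set_lebesgue_integral_def by (simp add: mult.assoc)
    also have "\<dots> = (\<integral>\<omega>. (indicator S \<omega> * \<pi> \<omega>) * V \<omega> \<partial>M)"
      unfolding \<mu>_def
      by (rule real_cond_exp_intg(2)) (auto intro!: bnd[OF Vi] piS)
    finally have e1: "(\<integral>\<omega>\<in>S. \<pi> \<omega> * \<mu> \<omega> \<partial>M) = (\<integral>\<omega>. (indicator S \<omega> * \<pi> \<omega>) * V \<omega> \<partial>M)" .
    define w where "w = (\<lambda>\<omega>. indicator S \<omega> * indicator A \<omega> - indicator S \<omega> * \<pi> \<omega> :: real)"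
    have [measurable]: "w \<in> borel_measurable M" unfolding w_def by measurable
    have wb: "AE \<omega> in M. \<bar>w \<omega>\<bar> \<le> 1"
      using pib by eventually_elim (auto simp: w_def indicator_def)
    have intSpi: "integrable M (\<lambda>\<omega>. indicator S \<omega> * \<pi> \<omega>)"
      using integrable_mult_indicator[OF SM intpi] by simp
    have intSA: "integrable M (\<lambda>\<omega>. indicator S \<omega> * indicator A \<omega> :: real)"
      using integrable_mult_indicator[OF SM intA] by simp
    have intw: "integrable M w" unfolding w_def using intSpi intSA by simp
    have intwV: "integrable M (\<lambda>\<omega>. w \<omega> * V \<omega>)" by (rule bnd[OF Vi _ _ wb]) auto
    have zero: "(\<integral>\<omega>. w \<omega> * indicator B (V \<omega>) \<partial>M) = 0" if B[measurable]: "B \<in> sets borel" for B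
    proof -
      define E where "E = {\<omega>\<in>space M. V \<omega> \<in> B}"
      have E[measurable]: "E \<in> sets M" unfolding E_def by measurable
      have intEA: "integrable M (indicator (E \<inter> A) :: 'a \<Rightarrow> real)" by (rule intI) simp
      have intE: "integrable M (indicator E :: 'a \<Rightarrow> real)" by (rule intI) simp
      have EAM: "E \<inter> A \<in> sets M" by simp
      have iSEA: "integrable M (\<lambda>\<omega>. indicator S \<omega> * indicator (E \<inter> A) \<omega> :: real)"
        using integrable_mult_indicator[OF SM intEA] by simp
      have mSpi: "(\<lambda>\<omega>. indicator S \<omega> * \<pi> \<omega>) \<in> borel_measurable F" by measurable
      have cE: "AE \<omega> in M. \<bar>indicator E \<omega>\<bar> \<le> (1::real)" by (rule AE_I2) (simp add: indicator_def)
      have iSpiE: "integrable M (\<lambda>\<omega>. (indicator S \<omega> * \<pi> \<omega>) * indicator E \<omega>)"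
        by (rule bnd'[OF intSpi borel_measurable_indicator[OF E] _ cE]) measurable
      have m1: "(\<lambda>\<omega>. indicator S \<omega> * real_cond_exp M F (indicator (E \<inter> A)) \<omega>) \<in> borel_measurable M"
        by measurable
      have m2: "(\<lambda>\<omega>. (indicator S \<omega> * \<pi> \<omega>) * real_cond_exp M F (indicator E) \<omega>) \<in> borel_measurable M"
        by measurable
      have i1: "integrable M (\<lambda>\<omega>. indicator S \<omega> * indicator A \<omega> * indicator B (V \<omega>) :: real)"
        by (rule bnd'[OF intSA]) (auto intro!: AE_I2 simp: indicator_def)
      have i2: "integrable M (\<lambda>\<omega>. indicator S \<omega> * \<pi> \<omega> * indicator B (V \<omega>))"
        by (rule bnd'[OF intSpi]) (auto intro!: AE_I2 simp: indicator_def)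
      have "(\<integral>\<omega>. (indicator S \<omega> * indicator A \<omega> * indicator B (V \<omega>) :: real) \<partial>M)
          = (\<integral>\<omega>. indicator S \<omega> * indicator (E \<inter> A) \<omega> \<partial>M)"
        by (intro Bochner_Integration.integral_cong) (auto simp: E_def indicator_def)
      also have "\<dots> = (\<integral>\<omega>. indicator S \<omega> * real_cond_exp M F (indicator (E \<inter> A)) \<omega> \<partial>M)"
        using real_cond_exp_intg(2)[OF iSEA borel_measurable_indicator[OF S] borel_measurable_indicator[OF EAM]]
        by simp
      also have "\<dots> = (\<integral>\<omega>. (indicator S \<omega> * \<pi> \<omega>) * real_cond_exp M F (indicator E) \<omega> \<partial>M)"
        apply (rule integral_cong_AE[OF m1 m2])
        using ci[OF B] unfolding E_def[symmetric] \<pi>_def[symmetric]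
        by eventually_elim simp
      also have "\<dots> = (\<integral>\<omega>. (indicator S \<omega> * \<pi> \<omega>) * indicator E \<omega> \<partial>M)"
        by (rule real_cond_exp_intg(2)[OF iSpiE mSpi borel_measurable_indicator[OF E]])
      also have "\<dots> = (\<integral>\<omega>. indicator S \<omega> * \<pi> \<omega> * indicator B (V \<omega>) \<partial>M)"
        by (intro Bochner_Integration.integral_cong) (auto simp: E_def indicator_def)
      finally have "(\<integral>\<omega>. (indicator S \<omega> * indicator A \<omega> * indicator B (V \<omega>) :: real) \<partial>M)
          = (\<integral>\<omega>. indicator S \<omega> * \<pi> \<omega> * indicator B (V \<omega>) \<partial>M)" .
      moreover have "(\<integral>\<omega>. w \<omega> * indicator B (V \<omega>) \<partial>M)
          = (\<integral>\<omega>. (indicator S \<omega> * indicator A \<omega> * indicator B (V \<omega>) :: real) \<partial>M)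
            - (\<integral>\<omega>. indicator S \<omega> * \<pi> \<omega> * indicator B (V \<omega>) \<partial>M)"
        using i1 i2 by (simp add: w_def left_diff_distrib)
      ultimately show ?thesis by simp
    qed
    have "(\<integral>\<omega>. w \<omega> * V \<omega> \<partial>M) = 0"
      by (rule pushforward_zero[OF _ V intw intwV zero]) auto
    moreover have "(\<integral>\<omega>. w \<omega> * V \<omega> \<partial>M)
        = (\<integral>\<omega>. indicator S \<omega> * indicator A \<omega> * V \<omega> \<partial>M) - (\<integral>\<omega>. (indicator S \<omega> * \<pi> \<omega>) * V \<omega> \<partial>M)"
    proof -
      have a: "integrable M (\<lambda>\<omega>. indicator S \<omega> * indicator A \<omega> * V \<omega> :: real)"
        by (rule bnd[OF Vi]) (auto intro!: AE_I2 simp: indicator_def)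
      have b: "integrable M (\<lambda>\<omega>. (indicator S \<omega> * \<pi> \<omega>) * V \<omega>)"
        by (rule bnd[OF Vi]) (auto intro: piS)
      show ?thesis using a b by (simp add: w_def left_diff_distrib)
    qed
    ultimately have "(\<integral>\<omega>. indicator S \<omega> * indicator A \<omega> * V \<omega> \<partial>M) = (\<integral>\<omega>\<in>S. \<pi> \<omega> * \<mu> \<omega> \<partial>M)"
      using e1 by simp
    then show "(\<integral>\<omega>\<in>S. indicator A \<omega> * V \<omega> \<partial>M) = (\<integral>\<omega>\<in>S. \<pi> \<omega> * \<mu> \<omega> \<partial>M)"
      unfolding set_lebesgue_integral_def by (simp add: mult.assoc)
  qed
qed


lemma sq_diff_integrable:
  fixes a b :: "'a \<Rightarrow> real"
  assumes [measurable]: "a \<in> borel_measurable M" "b \<in> borel_measurable M"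
    and ia: "integrable M (\<lambda>x. (a x)^2)" and ib: "integrable M (\<lambda>x. (b x)^2)"
  shows "integrable M (\<lambda>x. (a x - b x)^2)"
proof -
  have "integrable M (\<lambda>x. a x * b x)" by (rule L2_mult_integrable) (use ia ib in auto)
  then have "integrable M (\<lambda>x. (a x)^2 - 2 * (a x * b x) + (b x)^2)"
    using ia ib by auto
  moreover have "(\<lambda>x. (a x - b x)^2) = (\<lambda>x. (a x)^2 - 2 * (a x * b x) + (b x)^2)"
    by (rule ext) (simp add: power2_diff algebra_simps)
  ultimately show ?thesis by simp
qed

lemma integral_uniform_measure_real:
  fixes f :: "'a \<Rightarrow> real"
  assumes fm: "finite_measure M" and A[measurable]: "A \<in> sets M" and pos: "measure M A > 0"
    and f[measurable]: "f \<in> borel_measurable M"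
  shows "measure M A * (\<integral>x. f x \<partial>uniform_measure M A) = (\<integral>x. indicator A x * f x \<partial>M)"
proof -
  interpret finite_measure M by fact
  have "uniform_measure M A = density M (\<lambda>x. ennreal (indicator A x / measure M A))"
    unfolding uniform_measure_def
    by (intro density_cong) (auto simp: emeasure_eq_measure divide_ennreal[of 1 "measure M A", simplified] pos indicator_def)
  then have "(\<integral>x. f x \<partial>uniform_measure M A) = (\<integral>x. (indicator A x / measure M A) *\<^sub>R f x \<partial>M)"
    by (simp add: integral_density)
  also have "\<dots> = (\<integral>x. indicator A x * f x \<partial>M) / measure M A"
    by simp
  finally show ?thesis using pos by simp
qed

lemma sum_indicator_pick:
  fixes c :: "nat \<Rightarrow> real"
  assumes "\<omega> \<in> space M" "X \<omega> \<in> S" "finite S"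
  shows "(\<Sum>x\<in>S. indicator {\<omega>\<in>space M. X \<omega> = x} \<omega> * c x) = c (X \<omega>)"
proof -
  have "\<And>x. indicator {\<omega>\<in>space M. X \<omega> = x} \<omega> * c x = (if x = X \<omega> then c x else 0)"
    using assms by (auto simp: indicator_def)
  then show ?thesis using assms by (simp add: sum.delta)
qed

theorem theorem1:
  fixes M :: "'a measure" and N :: "'z measure" and K :: nat
    and X :: "'a \<Rightarrow> nat" and Z :: "'a \<Rightarrow> 'z" and Y :: "'a \<Rightarrow> real"
    and Yp :: "nat \<Rightarrow> 'a \<Rightarrow> real" and f0 :: "nat \<Rightarrow> 'z \<Rightarrow> real"
  assumes prob: "prob_space M"
    and X_meas: "X \<in> measurable M (count_space UNIV)"
    and X_range: "\<forall>\<omega>\<in>space M. X \<omega> \<in> {1..K}"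
    and Z_meas: "Z \<in> measurable M N"
    and Y_meas: "Y \<in> borel_measurable M"
    and Y_sq: "integrable M (\<lambda>\<omega>. (Y \<omega>)^2)"
    and Yp_meas: "\<forall>x\<in>{1..K}. Yp x \<in> borel_measurable M"
    and Yp_sq: "\<forall>x\<in>{1..K}. integrable M (\<lambda>\<omega>. (Yp x \<omega>)^2)"
    and p_pos: "\<forall>x\<in>{1..K}. measure M {\<omega>\<in>space M. X \<omega> = x} > 0"
    and consistency: "\<forall>\<omega>\<in>space M. Y \<omega> = Yp (X \<omega>) \<omega>"
    and ignorability: "cond_indep M (\<lambda>\<omega>. restrict (\<lambda>x. Yp x \<omega>) {1..K}) (PiM {1..K} (\<lambda>_. borel))
                          X (count_space UNIV) Z N"
    and positivity: "\<forall>x\<in>{1..K}. AE \<omega> in M.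
          0 < real_cond_exp M (gen_alg M Z N) (indicator {\<omega>\<in>space M. X \<omega> = x}) \<omega> \<and>
          real_cond_exp M (gen_alg M Z N) (indicator {\<omega>\<in>space M. X \<omega> = x}) \<omega> < 1"
    and f0_meas: "(\<lambda>(x, z). f0 x z) \<in> borel_measurable (count_space UNIV \<Otimes>\<^sub>M N)"
    and f0_cef: "AE \<omega> in M. f0 (X \<omega>) (Z \<omega>)
          = real_cond_exp M (gen_alg M (\<lambda>\<omega>. (X \<omega>, Z \<omega>)) (count_space UNIV \<Otimes>\<^sub>M N)) Y \<omega>"
  shows "(\<integral>\<omega>. (Y (fst \<omega>) - f0 (X (snd \<omega>)) (Z (fst \<omega>)))^2 \<partial>(M \<Otimes>\<^sub>M M))
         - (\<integral>\<omega>. (Y \<omega> - f0 (X \<omega>) (Z \<omega>))^2 \<partial>M)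
       = (\<Sum>x\<in>{1..K}. \<Sum>x'\<in>{1..K} - {x}.
            measure M {\<omega>\<in>space M. X \<omega> = x} * measure M {\<omega>\<in>space M. X \<omega> = x'} *
            (\<integral>\<omega>. (real_cond_exp M (gen_alg M Z N) (Yp x) \<omega>
                    - real_cond_exp M (gen_alg M Z N) (Yp x') \<omega>)^2
               \<partial>(uniform_measure M {\<omega>\<in>space M. X \<omega> = x})))"
proof -
  interpret P: prob_space M by (rule prob)
  define F where "F = gen_alg M Z N"
  define G where "G = gen_alg M (\<lambda>\<omega>. (X \<omega>, Z \<omega>)) (count_space UNIV \<Otimes>\<^sub>M N)"
  define A where "A = (\<lambda>x. {\<omega>\<in>space M. X \<omega> = x})"
  define p where "p = (\<lambda>x. measure M (A x))"
  define \<pi> where "\<pi> = (\<lambda>x. real_cond_exp M F (indicator (A x)))"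
  define \<mu> where "\<mu> = (\<lambda>x. real_cond_exp M F (Yp x))"
  define hX where "hX = (\<lambda>\<omega>. f0 (X \<omega>) (Z \<omega>))"
  note [measurable] = X_meas Z_meas Y_meas f0_meas
  have Ypm[measurable]: "Yp x \<in> borel_measurable M" if "x \<in> {1..K}" for x using Yp_meas that by auto
  have XZm: "(\<lambda>\<omega>. (X \<omega>, Z \<omega>)) \<in> measurable M (count_space UNIV \<Otimes>\<^sub>M N)" by measurable
  interpret SF: sigma_finite_subalgebra M F unfolding F_def by (rule gen_alg_sfs[OF prob Z_meas])
  interpret SG: sigma_finite_subalgebra M G unfolding G_def by (rule gen_alg_sfs[OF prob XZm])
  have subMG: "subalgebra M G" unfolding G_def by (rule gen_alg_subalg[OF XZm])
  have subGF: "subalgebra G F" unfolding G_def F_def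
    by (rule gen_alg_nested[OF XZm measurable_snd]) simp
  have Am[measurable]: "A x \<in> sets M" for x
    unfolding A_def by measurable
  have f0x[measurable]: "f0 x \<in> borel_measurable N" for x
    using measurable_Pair2[OF f0_meas, of x] by simp
  have gF[measurable]: "(\<lambda>\<omega>. f0 x (Z \<omega>)) \<in> borel_measurable F" for x
    unfolding F_def by (rule gen_alg_meas[OF Z_meas f0x])
  have gM[measurable]: "(\<lambda>\<omega>. f0 x (Z \<omega>)) \<in> borel_measurable M" for x by measurable
  have hXG: "hX \<in> borel_measurable G"
    unfolding G_def hX_def using gen_alg_meas[OF XZm f0_meas] by simp
  have hXM[measurable]: "hX \<in> borel_measurable M" unfolding hX_def by measurable
  have indG: "(indicator (A x) :: 'a \<Rightarrow> real) \<in> borel_measurable G" for x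
  proof -
    have "(\<lambda>az. indicator {x} (fst az) :: real) \<in> borel_measurable (count_space UNIV \<Otimes>\<^sub>M N)"
      by (rule measurable_compose[OF measurable_fst]) simp
    then have m0: "(\<lambda>\<omega>. (\<lambda>az. indicator {x} (fst az) :: real) (X \<omega>, Z \<omega>)) \<in> borel_measurable G"
      unfolding G_def by (rule gen_alg_meas[OF XZm])
    have eq: "\<And>\<omega>. \<omega> \<in> space G \<Longrightarrow> (\<lambda>az. indicator {x} (fst az) :: real) (X \<omega>, Z \<omega>) = indicator (A x) \<omega>"
      by (auto simp: G_def gen_alg_def A_def indicator_def)
    show ?thesis using measurable_cong[of G _ "indicator (A x)" borel, OF eq] m0 by simp
  qed
  have \<pi>F[measurable]: "\<pi> x \<in> borel_measurable F" "\<pi> x \<in> borel_measurable M" for x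
    unfolding \<pi>_def by auto
  have \<mu>F[measurable]: "\<mu> x \<in> borel_measurable F" "\<mu> x \<in> borel_measurable M" for x
    unfolding \<mu>_def by auto
  have intI: "integrable M (indicator E :: 'a \<Rightarrow> real)" if "E \<in> sets M" for E
    by (rule integrable_real_indicator) (auto simp: that P.emeasure_finite less_top[symmetric])
  have intYp: "integrable M (Yp x)" if "x \<in> {1..K}" for x
    by (rule P.square_integrable_imp_integrable) (use that Yp_sq in auto)
  have intY: "integrable M Y"
    by (rule P.square_integrable_imp_integrable) (use Y_sq in auto)

  have core: "AE \<omega> in M. f0 x (Z \<omega>) = \<mu> x \<omega>" if x: "x \<in> {1..K}" for x
  proof -
    note Ypx[measurable] = Ypm[OF x]
    have s1: "AE \<omega> in M. f0 x (Z \<omega>) * indicator (A x) \<omega>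
                = real_cond_exp M G (\<lambda>\<omega>. indicator (A x) \<omega> * Yp x \<omega>) \<omega>"
    proof -
      have "AE \<omega> in M. real_cond_exp M G (\<lambda>\<omega>. indicator (A x) \<omega> * Y \<omega>) \<omega>
                = indicator (A x) \<omega> * real_cond_exp M G Y \<omega>"
        by (rule SG.real_cond_exp_mult[OF indG Y_meas])
           (use integrable_mult_indicator[OF Am intY] in simp)
      moreover have "AE \<omega> in M. real_cond_exp M G (\<lambda>\<omega>. indicator (A x) \<omega> * Y \<omega>) \<omega>
                = real_cond_exp M G (\<lambda>\<omega>. indicator (A x) \<omega> * Yp x \<omega>) \<omega>"
        apply (rule SG.real_cond_exp_cong)
          apply (auto intro!: AE_I2 simp: A_def indicator_def consistency x)[1]
         apply measurable
        using x by auto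
      moreover note f0_cef
      ultimately show ?thesis
      proof eventually_elim
        case (elim \<omega>)
        then show ?case unfolding G_def[symmetric]
          by (auto simp: A_def indicator_def)
      qed
    qed
    have mfi[measurable]: "(\<lambda>\<omega>. f0 x (Z \<omega>) * indicator (A x) \<omega>) \<in> borel_measurable M" by measurable
    have intfi: "integrable M (\<lambda>\<omega>. f0 x (Z \<omega>) * indicator (A x) \<omega>)"
    proof -
      have "integrable M (real_cond_exp M G (\<lambda>\<omega>. indicator (A x) \<omega> * Yp x \<omega>))"
        by (rule SG.real_cond_exp_int(1)) (use integrable_mult_indicator[OF Am intYp[OF x]] in simp)
      then show ?thesis
        using integrable_cong_AE[OF mfi _ s1] by simp
    qed
    have s2: "AE \<omega> in M. real_cond_exp M F (\<lambda>\<omega>. f0 x (Z \<omega>) * indicator (A x) \<omega>) \<omega>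
               = real_cond_exp M F (\<lambda>\<omega>. indicator (A x) \<omega> * Yp x \<omega>) \<omega>"
    proof -
      have "AE \<omega> in M. real_cond_exp M F (\<lambda>\<omega>. f0 x (Z \<omega>) * indicator (A x) \<omega>) \<omega>
               = real_cond_exp M F (real_cond_exp M G (\<lambda>\<omega>. indicator (A x) \<omega> * Yp x \<omega>)) \<omega>"
        by (rule SF.real_cond_exp_cong[OF s1]) auto
      moreover have "AE \<omega> in M. real_cond_exp M F (real_cond_exp M G (\<lambda>\<omega>. indicator (A x) \<omega> * Yp x \<omega>)) \<omega>
               = real_cond_exp M F (\<lambda>\<omega>. indicator (A x) \<omega> * Yp x \<omega>) \<omega>"
        by (rule SF.real_cond_exp_nested_subalg[OF subMG subGF])
           (use integrable_mult_indicator[OF Am intYp[OF x]] in simp)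
      ultimately show ?thesis by eventually_elim simp
    qed
    have s3: "AE \<omega> in M. real_cond_exp M F (\<lambda>\<omega>. f0 x (Z \<omega>) * indicator (A x) \<omega>) \<omega>
               = f0 x (Z \<omega>) * \<pi> x \<omega>"
      unfolding \<pi>_def by (rule SF.real_cond_exp_mult[OF gF _ intfi]) simp
    have ci: "AE \<omega> in M.
       real_cond_exp M F (indicator ({\<omega>\<in>space M. Yp x \<omega> \<in> B} \<inter> A x)) \<omega>
       = real_cond_exp M F (indicator {\<omega>\<in>space M. Yp x \<omega> \<in> B}) \<omega> * real_cond_exp M F (indicator (A x)) \<omega>"
      if B: "B \<in> sets borel" for B
    proof -
      let ?U = "\<lambda>\<omega>. restrict (\<lambda>x. Yp x \<omega>) {1..K}"
      let ?A' = "(\<lambda>f. f x) -` B \<inter> space (PiM {1..K} (\<lambda>_. borel :: real measure))"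
      have A': "?A' \<in> sets (PiM {1..K} (\<lambda>_. borel))"
        by (rule measurable_sets[OF measurable_component_singleton[OF x] B])
      have e1: "{\<omega>\<in>space M. ?U \<omega> \<in> ?A'} = {\<omega>\<in>space M. Yp x \<omega> \<in> B}"
        using x by (auto simp: space_PiM)
      have e2: "{\<omega>\<in>space M. X \<omega> \<in> {x}} = A x" by (auto simp: A_def)
      have "\<forall>A'\<in>sets (PiM {1..K} (\<lambda>_. borel)). \<forall>B'\<in>sets (count_space UNIV). AE \<omega> in M.
        real_cond_exp M F (indicator ({\<omega>\<in>space M. ?U \<omega> \<in> A'} \<inter> {\<omega>\<in>space M. X \<omega> \<in> B'})) \<omega>
        = real_cond_exp M F (indicator {\<omega>\<in>space M. ?U \<omega> \<in> A'}) \<omega>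
          * real_cond_exp M F (indicator {\<omega>\<in>space M. X \<omega> \<in> B'}) \<omega>"
        using ignorability unfolding cond_indep_def F_def by blast
      from this[rule_format, OF A', of "{x}"] show ?thesis
        unfolding e1 e2 by simp
    qed
    have s4: "AE \<omega> in M. real_cond_exp M F (\<lambda>\<omega>. indicator (A x) \<omega> * Yp x \<omega>) \<omega>
               = \<pi> x \<omega> * \<mu> x \<omega>"
      unfolding \<pi>_def \<mu>_def
      by (rule ci_extend[OF SF.sigma_finite_subalgebra_axioms prob Ypm[OF x] intYp[OF x] Am ci])
    have pos: "AE \<omega> in M. 0 < \<pi> x \<omega>"
      using positivity x unfolding \<pi>_def F_def A_def by (auto elim!: eventually_mono)
    from s2 s3 s4 pos show ?thesis
      by eventually_elim auto
  qed

  have mu2: "integrable M (\<lambda>\<omega>. (\<mu> x \<omega>)^2)" if x: "x \<in> {1..K}" for x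
    unfolding \<mu>_def
    by (rule SF.integrable_convex_cond_exp[where I=UNIV and q="\<lambda>t. t^2"])
       (use intYp[OF x] Yp_sq x convex_power2 in auto)
  have g2: "integrable M (\<lambda>\<omega>. (f0 x (Z \<omega>))^2)" if x: "x \<in> {1..K}" for x
  proof -
    have "AE \<omega> in M. (f0 x (Z \<omega>))^2 = (\<mu> x \<omega>)^2" using core[OF x] by eventually_elim simp
    then show ?thesis using integrable_cong_AE[of "\<lambda>\<omega>. (f0 x (Z \<omega>))^2" M "\<lambda>\<omega>. (\<mu> x \<omega>)^2"] mu2[OF x]
      by simp
  qed
  have hX2: "integrable M (\<lambda>\<omega>. (hX \<omega>)^2)"
  proof (rule Bochner_Integration.integrable_bound[of _ "\<lambda>\<omega>. \<Sum>x\<in>{1..K}. (f0 x (Z \<omega>))^2"])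
    show "integrable M (\<lambda>\<omega>. \<Sum>x\<in>{1..K}. (f0 x (Z \<omega>))^2)"
      using g2 by (intro Bochner_Integration.integrable_sum) auto
    show "(\<lambda>\<omega>. (hX \<omega>)^2) \<in> borel_measurable M" by measurable
    show "AE \<omega> in M. norm ((hX \<omega>)^2) \<le> norm (\<Sum>x\<in>{1..K}. (f0 x (Z \<omega>))^2)"
    proof (rule AE_I2)
      fix \<omega> assume \<omega>: "\<omega> \<in> space M"
      have "(hX \<omega>)^2 \<le> (\<Sum>x\<in>{1..K}. (f0 x (Z \<omega>))^2)"
        unfolding hX_def
        by (rule member_le_sum[where f="\<lambda>x. (f0 x (Z \<omega>))^2"]) (use X_range \<omega> in auto)
      moreover have "0 \<le> (\<Sum>x\<in>{1..K}. (f0 x (Z \<omega>))^2)" by (intro sum_nonneg) auto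
      ultimately show "norm ((hX \<omega>)^2) \<le> norm (\<Sum>x\<in>{1..K}. (f0 x (Z \<omega>))^2)" by simp
    qed
  qed

  define e where "e = (\<integral>\<omega>. (Y \<omega> - hX \<omega>)^2 \<partial>M)"
  define c where "c = (\<lambda>x'. \<integral>\<omega>. (Y \<omega> - f0 x' (Z \<omega>))^2 \<partial>M)"
  define D where "D = (\<lambda>x'. \<integral>\<omega>. (hX \<omega> - f0 x' (Z \<omega>))^2 \<partial>M)"
  have pyth: "c x' = e + D x'" if x': "x' \<in> {1..K}" for x'
  proof -
    define d where "d = (\<lambda>\<omega>. hX \<omega> - f0 x' (Z \<omega>))"
    have dG: "d \<in> borel_measurable G"
      unfolding d_def using hXG measurable_from_subalg[OF subGF gF[of x']] by measurable
    have dM[measurable]: "d \<in> borel_measurable M" unfolding d_def by measurable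
    have id2: "integrable M (\<lambda>\<omega>. (d \<omega>)^2)" unfolding d_def
      by (rule sq_diff_integrable) (use hX2 g2[OF x'] in auto)
    have idY: "integrable M (\<lambda>\<omega>. d \<omega> * Y \<omega>)"
      by (rule L2_mult_integrable) (use id2 Y_sq in auto)
    have idh: "integrable M (\<lambda>\<omega>. d \<omega> * hX \<omega>)"
      by (rule L2_mult_integrable) (use id2 hX2 in auto)
    have iYh: "integrable M (\<lambda>\<omega>. (Y \<omega> - hX \<omega>)^2)"
      by (rule sq_diff_integrable) (use Y_sq hX2 in auto)
    have orth: "(\<integral>\<omega>. d \<omega> * Y \<omega> \<partial>M) = (\<integral>\<omega>. d \<omega> * hX \<omega> \<partial>M)"
    proof -
      have "(\<integral>\<omega>. d \<omega> * Y \<omega> \<partial>M) = (\<integral>\<omega>. d \<omega> * real_cond_exp M G Y \<omega> \<partial>M)"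
        by (rule SG.real_cond_exp_intg(2)[OF idY dG Y_meas, symmetric])
      also have "\<dots> = (\<integral>\<omega>. d \<omega> * hX \<omega> \<partial>M)"
        by (rule integral_cong_AE) (use f0_cef in \<open>auto simp: hX_def G_def elim!: eventually_mono\<close>)
      finally show ?thesis .
    qed
    have "c x' = (\<integral>\<omega>. (Y \<omega> - hX \<omega>)^2 + 2 * (d \<omega> * Y \<omega>) - 2 * (d \<omega> * hX \<omega>) + (d \<omega>)^2 \<partial>M)"
      unfolding c_def
      by (rule Bochner_Integration.integral_cong) (auto simp: d_def power2_eq_square algebra_simps)
    also have "\<dots> = e + 2 * (\<integral>\<omega>. d \<omega> * Y \<omega> \<partial>M) - 2 * (\<integral>\<omega>. d \<omega> * hX \<omega> \<partial>M) + (\<integral>\<omega>. (d \<omega>)^2 \<partial>M)"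
      using iYh idY idh id2 by (simp add: e_def)
    also have "\<dots> = e + D x'"
      using orth by (simp add: D_def d_def)
    finally show ?thesis .
  qed

  define I where "I = (\<lambda>x x'. \<integral>\<omega>. (\<mu> x \<omega> - \<mu> x' \<omega>)^2 \<partial>uniform_measure M (A x))"
  have ppos: "p x > 0" if "x \<in> {1..K}" for x
    using p_pos that unfolding p_def A_def by auto
  have Ddec: "D x' = (\<Sum>x\<in>{1..K}. p x * I x x')" if x': "x' \<in> {1..K}" for x'
  proof -
    have "D x' = (\<integral>\<omega>. (\<Sum>x\<in>{1..K}. indicator (A x) \<omega> * (f0 x (Z \<omega>) - f0 x' (Z \<omega>))^2) \<partial>M)"
      unfolding D_def
    proof (rule Bochner_Integration.integral_cong[OF refl])
      fix \<omega> assume \<omega>: "\<omega> \<in> space M"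
      have "(\<Sum>x\<in>{1..K}. indicator (A x) \<omega> * (f0 x (Z \<omega>) - f0 x' (Z \<omega>))^2) = (f0 (X \<omega>) (Z \<omega>) - f0 x' (Z \<omega>))^2"
        unfolding A_def by (rule sum_indicator_pick[where c = "\<lambda>x. (f0 x (Z \<omega>) - f0 x' (Z \<omega>))^2"]) (use \<omega> X_range in auto)
      then show "(hX \<omega> - f0 x' (Z \<omega>))^2 = (\<Sum>x\<in>{1..K}. indicator (A x) \<omega> * (f0 x (Z \<omega>) - f0 x' (Z \<omega>))^2)"
        by (simp add: hX_def)
    qed
    also have "\<dots> = (\<Sum>x\<in>{1..K}. \<integral>\<omega>. indicator (A x) \<omega> * (f0 x (Z \<omega>) - f0 x' (Z \<omega>))^2 \<partial>M)"
    proof (rule Bochner_Integration.integral_sum)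
      fix x assume x: "x \<in> {1..K}"
      have "integrable M (\<lambda>\<omega>. (f0 x (Z \<omega>) - f0 x' (Z \<omega>))^2)"
        by (rule sq_diff_integrable) (use g2[OF x] g2[OF x'] in auto)
      from integrable_mult_indicator[OF Am this]
      show "integrable M (\<lambda>\<omega>. indicator (A x) \<omega> * (f0 x (Z \<omega>) - f0 x' (Z \<omega>))^2)"
        by simp
    qed
    also have "\<dots> = (\<Sum>x\<in>{1..K}. p x * I x x')"
    proof (rule sum.cong[OF refl])
      fix x assume x: "x \<in> {1..K}"
      have "(\<integral>\<omega>. indicator (A x) \<omega> * (f0 x (Z \<omega>) - f0 x' (Z \<omega>))^2 \<partial>M)
          = (\<integral>\<omega>. indicator (A x) \<omega> * (\<mu> x \<omega> - \<mu> x' \<omega>)^2 \<partial>M)"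
      proof (rule integral_cong_AE)
        show "AE \<omega> in M. indicator (A x) \<omega> * (f0 x (Z \<omega>) - f0 x' (Z \<omega>))^2 = indicator (A x) \<omega> * (\<mu> x \<omega> - \<mu> x' \<omega>)^2"
          using core[OF x] core[OF x'] by eventually_elim simp
      qed measurable
      also have "\<dots> = p x * I x x'"
        unfolding p_def I_def
        by (rule integral_uniform_measure_real[symmetric])
           (use ppos[OF x] P.finite_measure_axioms in \<open>auto simp: p_def\<close>)
      finally show "(\<integral>\<omega>. indicator (A x) \<omega> * (f0 x (Z \<omega>) - f0 x' (Z \<omega>))^2 \<partial>M) = p x * I x x'" .
    qed
    finally show ?thesis .
  qed

  have psum: "(\<Sum>x\<in>{1..K}. p x) = 1"
  proof -
    have "(1::real) = (\<integral>\<omega>. (1::real) \<partial>M)" by (simp add: P.prob_space)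
    also have "\<dots> = (\<integral>\<omega>. (\<Sum>x\<in>{1..K}. indicator (A x) \<omega> * 1) \<partial>M)"
    proof (rule Bochner_Integration.integral_cong[OF refl])
      fix \<omega> assume \<omega>: "\<omega> \<in> space M"
      have "(\<Sum>x\<in>{1..K}. indicator (A x) \<omega> * (\<lambda>_. 1::real) x) = (\<lambda>_. 1) (X \<omega>)"
        unfolding A_def by (rule sum_indicator_pick) (use \<omega> X_range in auto)
      then show "1 = (\<Sum>x\<in>{1..K}. indicator (A x) \<omega> * (1::real))" by simp
    qed
    also have "\<dots> = (\<Sum>x\<in>{1..K}. p x)"
      using intI[OF Am] by (simp add: p_def)
    finally show ?thesis by simp
  qed

  have cnn: "c x' \<ge> 0" for x' unfolding c_def by (rule integral_nonneg_AE) auto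
  have cint: "integrable M (\<lambda>\<omega>. (Y \<omega> - f0 x' (Z \<omega>))^2)" if x': "x' \<in> {1..K}" for x'
    by (rule sq_diff_integrable) (use Y_sq g2[OF x'] in auto)
  interpret PP: pair_prob_space M M by unfold_locales
  have prodm: "(\<lambda>\<omega>. (Y (fst \<omega>) - f0 (X (snd \<omega>)) (Z (fst \<omega>)))^2) \<in> borel_measurable (M \<Otimes>\<^sub>M M)"
    by measurable
  have isum: "integrable M (\<lambda>b. \<Sum>x'\<in>{1..K}. indicator (A x') b * c x')"
    using intI[OF Am] by (intro Bochner_Integration.integrable_sum) auto
  have vsum: "(\<integral>b. (\<Sum>x'\<in>{1..K}. indicator (A x') b * c x') \<partial>M) = (\<Sum>x'\<in>{1..K}. p x' * c x')"
  proof -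
    have AsM: "A x' \<inter> space M = A x'" for x' by (auto simp: A_def)
    have "(\<integral>b. (\<Sum>x'\<in>{1..K}. indicator (A x') b * c x') \<partial>M) = (\<Sum>x'\<in>{1..K}. \<integral>b. indicator (A x') b * c x' \<partial>M)"
      by (rule Bochner_Integration.integral_sum) (intro integrable_mult_left intI Am)
    also have "\<dots> = (\<Sum>x'\<in>{1..K}. p x' * c x')"
      by (rule sum.cong[OF refl]) (simp add: p_def AsM mult.commute)
    finally show ?thesis .
  qed
  have prodint: "(\<integral>\<omega>. (Y (fst \<omega>) - f0 (X (snd \<omega>)) (Z (fst \<omega>)))^2 \<partial>(M \<Otimes>\<^sub>M M))
        = (\<Sum>x'\<in>{1..K}. p x' * c x')"
  proof -
    have "(\<integral>\<^sup>+\<omega>. ennreal ((Y (fst \<omega>) - f0 (X (snd \<omega>)) (Z (fst \<omega>)))^2) \<partial>(M \<Otimes>\<^sub>M M))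
        = (\<integral>\<^sup>+b. \<integral>\<^sup>+a. ennreal ((Y a - f0 (X b) (Z a))^2) \<partial>M \<partial>M)"
      using PP.nn_integral_snd[of "\<lambda>\<omega>. ennreal ((Y (fst \<omega>) - f0 (X (snd \<omega>)) (Z (fst \<omega>)))^2)"] prodm
      by simp
    also have "\<dots> = (\<integral>\<^sup>+b. ennreal (\<Sum>x'\<in>{1..K}. indicator (A x') b * c x') \<partial>M)"
    proof (rule nn_integral_cong)
      fix b assume b: "b \<in> space M"
      have Xb: "X b \<in> {1..K}" using X_range b by auto
      have "(\<integral>\<^sup>+a. ennreal ((Y a - f0 (X b) (Z a))^2) \<partial>M) = ennreal (c (X b))"
        unfolding c_def by (rule nn_integral_eq_integral[OF cint[OF Xb]]) auto
      also have "c (X b) = (\<Sum>x'\<in>{1..K}. indicator (A x') b * c x')"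
        unfolding A_def by (rule sum_indicator_pick[symmetric]) (use b Xb in auto)
      finally show "(\<integral>\<^sup>+a. ennreal ((Y a - f0 (X b) (Z a))^2) \<partial>M) = ennreal (\<Sum>x'\<in>{1..K}. indicator (A x') b * c x')" .
    qed
    also have "\<dots> = ennreal (\<integral>b. (\<Sum>x'\<in>{1..K}. indicator (A x') b * c x') \<partial>M)"
      by (rule nn_integral_eq_integral[OF isum]) (auto intro!: sum_nonneg simp: cnn)
    finally have nn: "(\<integral>\<^sup>+\<omega>. ennreal ((Y (fst \<omega>) - f0 (X (snd \<omega>)) (Z (fst \<omega>)))^2) \<partial>(M \<Otimes>\<^sub>M M))
        = ennreal (\<Sum>x'\<in>{1..K}. p x' * c x')" using vsum by simp
    have "0 \<le> (\<Sum>x'\<in>{1..K}. p x' * c x')"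
      by (intro sum_nonneg mult_nonneg_nonneg) (auto simp: p_def cnn)
    then show ?thesis
      by (subst integral_eq_nn_integral[OF prodm]) (auto simp: nn)
  qed

  have Izero: "I x x = 0" for x unfolding I_def by simp
  have "(\<Sum>x'\<in>{1..K}. p x' * c x') - e = (\<Sum>x'\<in>{1..K}. p x' * D x')"
  proof -
    have "(\<Sum>x'\<in>{1..K}. p x' * c x') = (\<Sum>x'\<in>{1..K}. p x' * e + p x' * D x')"
      by (rule sum.cong[OF refl]) (simp add: pyth algebra_simps)
    also have "\<dots> = e * (\<Sum>x'\<in>{1..K}. p x') + (\<Sum>x'\<in>{1..K}. p x' * D x')"
      by (simp add: sum.distrib sum_distrib_left mult.commute)
    finally show ?thesis using psum by simp
  qed
  also have "\<dots> = (\<Sum>x'\<in>{1..K}. \<Sum>x\<in>{1..K}. p x * p x' * I x x')"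
    by (rule sum.cong[OF refl]) (simp add: Ddec sum_distrib_left algebra_simps)
  also have "\<dots> = (\<Sum>x\<in>{1..K}. \<Sum>x'\<in>{1..K}. p x * p x' * I x x')"
    by (rule sum.swap)
  also have "\<dots> = (\<Sum>x\<in>{1..K}. \<Sum>x'\<in>{1..K} - {x}. p x * p x' * I x x')"
  proof (rule sum.cong[OF refl])
    fix x assume x: "x \<in> {1..K}"
    show "(\<Sum>x'\<in>{1..K}. p x * p x' * I x x') = (\<Sum>x'\<in>{1..K} - {x}. p x * p x' * I x x')"
      using sum.remove[OF _ x, of "\<lambda>x'. p x * p x' * I x x'"] by (simp add: Izero)
  qed
  finally have final: "(\<Sum>x'\<in>{1..K}. p x' * c x') - e = (\<Sum>x\<in>{1..K}. \<Sum>x'\<in>{1..K} - {x}. p x * p x' * I x x')" .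
  show ?thesis
    using final prodint unfolding e_def hX_def p_def A_def I_def \<mu>_def F_def by simp
qed

end
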